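(* Let $k$ be a field of characteristic zero and let ${\boldsymbol\lambda},{\boldsymbol\mu}\in M_n(k)$ be antisymmetric. If there exists $A\in GL_n(\mathbb Z)$ with ${\boldsymbol\mu}=A{\boldsymbol\lambda}A^{\mathrm{tr}}$, then $k_{\boldsymbol\lambda}(x_1,\dots,x_n)\cong k_{\boldsymbol\mu}(x_1,\dots,x_n)$ as Poisson algebras over $k$.
   Context: For antisymmetric ${\boldsymbol\lambda}\in M_n(k)$, $k_{\boldsymbol\lambda}(x_1,\dots,x_n)$ is the rational function field $k(x_1,\dots,x_n)$ with the unique Poisson bracket satisfying $\{x_i,x_j\}=\lambda_{ij}x_ix_j$ for all $i,j$. *)

theory Defs
  imports Main
begin

(* Matrices of size n x n are functions nat => nat => _, only entries i,j < n matter. *)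

definition antisym_mat :: "nat \<Rightarrow> (nat \<Rightarrow> nat \<Rightarrow> 'k::field) \<Rightarrow> bool" where
  "antisym_mat n L \<longleftrightarrow> (\<forall>i<n. \<forall>j<n. L i j = - L j i)"

definition GL_int :: "nat \<Rightarrow> (nat \<Rightarrow> nat \<Rightarrow> int) \<Rightarrow> bool" where
  "GL_int n A \<longleftrightarrow> (\<exists>B::nat \<Rightarrow> nat \<Rightarrow> int.
      (\<forall>i<n. \<forall>j<n. (\<Sum>l<n. A i l * B l j) = (if i = j then 1 else 0)) \<and>
      (\<forall>i<n. \<forall>j<n. (\<Sum>l<n. B i l * A l j) = (if i = j then 1 else 0)))"

definition congr_mat :: "nat \<Rightarrow> (nat \<Rightarrow> nat \<Rightarrow> int) \<Rightarrow> (nat \<Rightarrow> nat \<Rightarrow> 'k::field) \<Rightarrow> nat \<Rightarrow> nat \<Rightarrow> 'k" where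
  "congr_mat n A L i j = (\<Sum>p<n. \<Sum>q<n. of_int (A i p) * L p q * of_int (A j q))"

(* iota : k -> K is a ring homomorphism (making K a k-algebra) *)
definition ring_hom_fun :: "('a::field \<Rightarrow> 'b::field) \<Rightarrow> bool" where
  "ring_hom_fun f \<longleftrightarrow> f 1 = 1 \<and> (\<forall>a b. f (a + b) = f a + f b) \<and> (\<forall>a b. f (a * b) = f a * f b)"

definition subfield_set :: "'a::field set \<Rightarrow> bool" where
  "subfield_set S \<longleftrightarrow> 0 \<in> S \<and> 1 \<in> S \<and> (\<forall>a\<in>S. \<forall>b\<in>S. a + b \<in> S \<and> a * b \<in> S) \<and>
     (\<forall>a\<in>S. - a \<in> S \<and> inverse a \<in> S)"

(* K is the rational function field k(x_1,...,x_n) (variables indexed 0..n-1):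
   x_0..x_{n-1} are algebraically independent over iota(k), and K is generated as a field
   by iota(k) and the x_i. *)
definition is_rat_fun_field :: "nat \<Rightarrow> ('k::field \<Rightarrow> 'a::field) \<Rightarrow> (nat \<Rightarrow> 'a) \<Rightarrow> bool" where
  "is_rat_fun_field n \<iota> x \<longleftrightarrow> ring_hom_fun \<iota> \<and>
     (\<forall>M c. finite M \<longrightarrow> M \<subseteq> {m. \<forall>i\<ge>n. m i = 0} \<longrightarrow>
        (\<Sum>m\<in>M. \<iota> (c m) * (\<Prod>i<n. x i ^ m i)) = 0 \<longrightarrow> (\<forall>m\<in>M. c m = 0)) \<and>
     (\<forall>S. subfield_set S \<longrightarrow> range \<iota> \<subseteq> S \<longrightarrow> x ` {..<n} \<subseteq> S \<longrightarrow> S = UNIV)"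

definition poisson_bracket :: "('k::field \<Rightarrow> 'a::field) \<Rightarrow> ('a \<Rightarrow> 'a \<Rightarrow> 'a) \<Rightarrow> bool" where
  "poisson_bracket \<iota> br \<longleftrightarrow>
     (\<forall>a b c. br (a + b) c = br a c + br b c) \<and>
     (\<forall>a b c. br a (b + c) = br a b + br a c) \<and>
     (\<forall>r a b. br (\<iota> r * a) b = \<iota> r * br a b) \<and>
     (\<forall>r a b. br a (\<iota> r * b) = \<iota> r * br a b) \<and>
     (\<forall>a. br a a = 0) \<and>
     (\<forall>a b. br a b = - br b a) \<and>
     (\<forall>a b c. br a (br b c) + br b (br c a) + br c (br a b) = 0) \<and>
     (\<forall>a b c. br a (b * c) = br a b * c + b * br a c)"

definition is_k_lambda :: "nat \<Rightarrow> (nat \<Rightarrow> nat \<Rightarrow> 'k::field) \<Rightarrow> ('k \<Rightarrow> 'a::field) \<Rightarrow> (nat \<Rightarrow> 'a) \<Rightarrow> ('a \<Rightarrow> 'a \<Rightarrow> 'a) \<Rightarrow> bool" where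
  "is_k_lambda n L \<iota> x br \<longleftrightarrow> is_rat_fun_field n \<iota> x \<and> poisson_bracket \<iota> br \<and>
     (\<forall>i<n. \<forall>j<n. br (x i) (x j) = \<iota> (L i j) * x i * x j)"

definition poisson_iso :: "('k::field \<Rightarrow> 'a::field) \<Rightarrow> ('a \<Rightarrow> 'a \<Rightarrow> 'a) \<Rightarrow> ('k \<Rightarrow> 'b::field) \<Rightarrow> ('b \<Rightarrow> 'b \<Rightarrow> 'b) \<Rightarrow> ('a \<Rightarrow> 'b) \<Rightarrow> bool" where
  "poisson_iso \<iota> br \<iota>' br' f \<longleftrightarrow> bij f \<and> f 1 = 1 \<and>
     (\<forall>a b. f (a + b) = f a + f b) \<and> (\<forall>a b. f (a * b) = f a * f b) \<and>
     (\<forall>r a. f (\<iota> r * a) = \<iota>' r * f a) \<and>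
     (\<forall>a b. f (br a b) = br' (f a) (f b))"

end

theory Submission
  imports Defs
begin


lemma der_one:
  assumes "\<And>a b. D (a*b) = D a * b + a * D b"
  shows "D (1::'a::field) = 0"
proof -
  have "D 1 = D 1 + D 1" using assms[of 1 1] by simp
  then show ?thesis by (metis add_cancel_right_right)
qed

lemma der_pow:
  assumes "\<And>a b. D (a*b) = D a * b + a * D (b::'a::field)" and "w \<noteq> 0"
  shows "D (w ^ k) = of_nat k * w ^ k * D w / w"
proof (induction k)
  case 0 then show ?case using der_one[OF assms(1)] by simp
next
  case (Suc k)
  have "D (w ^ Suc k) = D w * w^k + w * D (w^k)" using assms(1)[of w "w^k"] by (simp add: mult.commute)
  also have "\<dots> = of_nat (Suc k) * w ^ Suc k * D w / w" using Suc assms(2)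
    by (simp add: field_simps)
  finally show ?case .
qed

lemma der_inv:
  assumes "\<And>a b. D (a*b) = D a * b + a * D (b::'a::field)" and "u \<noteq> 0"
  shows "D (inverse u) = - D u / (u*u)"
proof -
  have "0 = D (u * inverse u)" using assms der_one[OF assms(1)] by simp
  also have "\<dots> = D u * inverse u + u * D (inverse u)" by (rule assms(1))
  finally have "u * D (inverse u) = - D u * inverse u" by (simp add: eq_neg_iff_add_eq_0 add.commute)
  then show ?thesis using assms(2) by (simp add: field_simps)

qed

lemma der_powi:
  assumes "\<And>a b. D (a*b) = D a * b + a * D (b::'a::field)" and "w \<noteq> 0"
  shows "D (w powi k) = of_int k * w powi k * D w / w"
proof (cases "k \<ge> 0")
  case True
  then obtain m where k: "k = int m" using nonneg_int_cases by blast
  show ?thesis using der_pow[OF assms, of m] k by simp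
next
  case False
  then obtain m where k: "k = - int m" by (metis le_cases neg_0_le_iff_le nonneg_int_cases minus_minus)
  have wm: "w^m \<noteq> 0" using assms(2) by simp
  have "D (w powi k) = D (inverse (w^m))" using k by (simp add: power_int_minus)
  also have "\<dots> = - D (w^m) / (w^m*w^m)" by (rule der_inv[OF assms(1) wm])
  also have "\<dots> = of_int k * w powi k * D w / w" using der_pow[OF assms, of m] k wm assms(2)
    by (simp add: power_int_minus field_simps)
  finally show ?thesis .
qed

lemma der_prod:
  assumes "\<And>a b. D (a*b) = D a * b + a * D (b::'a::field)" and "finite S" and "\<forall>p\<in>S. g p \<noteq> 0"
  shows "D (\<Prod>p\<in>S. g p) = (\<Prod>p\<in>S. g p) * (\<Sum>p\<in>S. D (g p) / g p)"
  using assms(2,3)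
proof (induction S rule: finite_induct)
  case empty then show ?case using der_one[OF assms(1)] by simp
next
  case (insert a F)
  have "D (\<Prod>p\<in>insert a F. g p) = D (g a * (\<Prod>p\<in>F. g p))" using insert by simp
  also have "\<dots> = D (g a) * (\<Prod>p\<in>F. g p) + g a * D (\<Prod>p\<in>F. g p)" by (rule assms(1))
  also have "\<dots> = (\<Prod>p\<in>insert a F. g p) * (\<Sum>p\<in>insert a F. D (g p) / g p)"
    using insert by (simp add: field_simps)
  finally show ?case .
qed



definition Lm :: "nat \<Rightarrow> (nat \<Rightarrow> 'a::field) \<Rightarrow> (nat \<Rightarrow> int) \<Rightarrow> 'a" where
  "Lm n x e = (\<Prod>p<n. x p powi e p)"

lemma hom_0: "ring_hom_fun \<iota> \<Longrightarrow> \<iota> 0 = 0"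
  unfolding ring_hom_fun_def by (metis add_cancel_right_right add_0)
lemma hom_add: "ring_hom_fun \<iota> \<Longrightarrow> \<iota> (a+b) = \<iota> a + \<iota> b"
  unfolding ring_hom_fun_def by blast
lemma hom_mult: "ring_hom_fun \<iota> \<Longrightarrow> \<iota> (a*b) = \<iota> a * \<iota> b"
  unfolding ring_hom_fun_def by blast
lemma hom_1: "ring_hom_fun \<iota> \<Longrightarrow> \<iota> 1 = 1"
  unfolding ring_hom_fun_def by blast
lemma hom_neg: "ring_hom_fun \<iota> \<Longrightarrow> \<iota> (-a) = - \<iota> a"
  using hom_add[of \<iota> a "-a"] hom_0[of \<iota>] by (simp add: eq_neg_iff_add_eq_0 add.commute)
lemma hom_sum: "ring_hom_fun \<iota> \<Longrightarrow> \<iota> (sum g S) = (\<Sum>s\<in>S. \<iota> (g s))"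
  by (induction S rule: infinite_finite_induct) (auto simp: hom_0 hom_add)
lemma hom_of_nat: "ring_hom_fun \<iota> \<Longrightarrow> \<iota> (of_nat m) = of_nat m"
  by (induction m) (auto simp: hom_0 hom_add hom_1)
lemma hom_of_int: assumes "ring_hom_fun \<iota>" shows "\<iota> (of_int m) = of_int m"
proof (cases "m \<ge> 0")
  case True
  then obtain k where "m = int k" using nonneg_int_cases by blast
  then show ?thesis using hom_of_nat[OF assms] by simp
next
  case False
  then obtain k where "m = - int k" by (metis le_cases neg_0_le_iff_le nonneg_int_cases minus_minus)
  then show ?thesis using hom_of_nat[OF assms] hom_neg[OF assms] by simp
qed
lemma hom_nz: "ring_hom_fun \<iota> \<Longrightarrow> (\<iota> a = 0) = (a = 0)"
proof
  assume h: "ring_hom_fun \<iota>" "\<iota> a = 0"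
  show "a = 0"
  proof (rule ccontr)
    assume "a \<noteq> 0"
    then have "\<iota> (a * inverse a) = 1" using h hom_1 by simp
    then show False using h hom_mult[OF h(1)] by simp
  qed
qed (simp add: hom_0)

lemma pb_leib: "poisson_bracket \<iota> br \<Longrightarrow> br a (b*c) = br a b * c + b * br a c"
  unfolding poisson_bracket_def by blast
lemma pb_anti: "poisson_bracket \<iota> br \<Longrightarrow> br a b = - br b a"
  unfolding poisson_bracket_def by blast
lemma pb_const: assumes "poisson_bracket \<iota> br" "ring_hom_fun \<iota>" shows "br a (\<iota> r) = 0"
proof -
  have "br a 1 = 0" using der_one[of "br a"] pb_leib[OF assms(1)] by blast
  moreover have "br a (\<iota> r * 1) = \<iota> r * br a 1" using assms(1) unfolding poisson_bracket_def by blast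
  ultimately show ?thesis by simp
qed
lemma pb_const': assumes "poisson_bracket \<iota> br" "ring_hom_fun \<iota>" shows "br (\<iota> r) a = 0"
  using pb_const[OF assms] pb_anti[OF assms(1)] by (metis neg_equal_0_iff_equal)

lemma br_Lm:
  assumes pb: "poisson_bracket \<iota> br" and nz: "\<forall>p<n. y p \<noteq> 0"
  shows "br a (Lm n y v) = Lm n y v * (\<Sum>q<n. of_int (v q) * br a (y q) / y q)"
proof -
  have D: "\<And>b c. br a (b*c) = br a b * c + b * br a c" using pb_leib[OF pb] .
  have "br a (Lm n y v) = Lm n y v * (\<Sum>q<n. br a (y q powi v q) / y q powi v q)"
    unfolding Lm_def by (rule der_prod[OF D]) (auto simp: nz power_int_not_zero)
  also have "\<dots> = Lm n y v * (\<Sum>q<n. of_int (v q) * br a (y q) / y q)"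
    by (intro arg_cong[where f="\<lambda>t. _ * t"] sum.cong refl)
       (simp add: der_powi[OF D] nz power_int_not_zero)
  finally show ?thesis .
qed

lemma Lm_nz: "\<forall>p<n. y p \<noteq> 0 \<Longrightarrow> Lm n y v \<noteq> 0"
  unfolding Lm_def by (auto simp: power_int_not_zero)

lemma br_Lm_Lm:
  assumes rh: "ring_hom_fun \<iota>" and pb: "poisson_bracket \<iota> br"
    and brxy: "\<forall>p<n. \<forall>q<n. br (y p) (y q) = \<iota> (M p q) * y p * y q"
    and nz: "\<forall>p<n. y p \<noteq> 0"
  shows "br (Lm n y u) (Lm n y v) =
     \<iota> (\<Sum>p<n. \<Sum>q<n. of_int (u p) * M p q * of_int (v q)) * Lm n y u * Lm n y v"
proof -
  have s2: "br (y p) (Lm n y v) = Lm n y v * ((\<Sum>q<n. of_int (v q) * \<iota> (M p q)) * y p)" if "p < n" for p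
    unfolding br_Lm[OF pb nz]
    unfolding sum_distrib_right
    by (intro arg_cong[where f="\<lambda>t. _ * t"] sum.cong refl) (simp add: brxy that nz)
  have "br (Lm n y u) (Lm n y v) = - br (Lm n y v) (Lm n y u)" by (rule pb_anti[OF pb])
  also have "\<dots> = - (Lm n y u * (\<Sum>p<n. of_int (u p) * br (Lm n y v) (y p) / y p))"
    by (simp add: br_Lm[OF pb nz])
  also have "\<dots> = Lm n y u * (\<Sum>p<n. of_int (u p) * br (y p) (Lm n y v) / y p)"
    by (simp add: pb_anti[OF pb, of "Lm n y v"] sum_negf)
  also have "\<dots> = Lm n y u * (\<Sum>p<n. of_int (u p) * (Lm n y v * (\<Sum>q<n. of_int (v q) * \<iota> (M p q))))"
    by (intro arg_cong[where f="\<lambda>t. _ * t"] sum.cong refl)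
       (simp add: s2 nz)
  also have "\<dots> = (\<Sum>p<n. \<Sum>q<n. of_int (u p) * \<iota> (M p q) * of_int (v q)) * Lm n y u * Lm n y v"
    by (simp add: sum_distrib_left sum_distrib_right mult_ac)
  also have "(\<Sum>p<n. \<Sum>q<n. of_int (u p) * \<iota> (M p q) * of_int (v q)) =
      \<iota> (\<Sum>p<n. \<Sum>q<n. of_int (u p) * M p q * of_int (v q))"
    by (simp add: hom_sum[OF rh] hom_mult[OF rh] hom_of_int[OF rh])
  finally show ?thesis .
qed



definition ev :: "nat \<Rightarrow> ('k::field \<Rightarrow> 'a::field) \<Rightarrow> (nat \<Rightarrow> 'a) \<Rightarrow> ('k \<times> (nat \<Rightarrow> int)) list \<Rightarrow> 'a" where
  "ev n \<iota> x p = (\<Sum>(c,e)\<leftarrow>p. \<iota> c * Lm n x e)"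

definition coef :: "('k::field \<times> (nat \<Rightarrow> int)) list \<Rightarrow> (nat \<Rightarrow> int) \<Rightarrow> 'k" where
  "coef p e = (\<Sum>(c,e')\<leftarrow>p. if e' = e then c else 0)"

definition supp :: "nat \<Rightarrow> (nat \<Rightarrow> int) \<Rightarrow> bool" where
  "supp n e \<longleftrightarrow> (\<forall>p\<ge>n. e p = 0)"

lemma ev_Nil[simp]: "ev n \<iota> x [] = 0" by (simp add: ev_def)
lemma ev_Cons[simp]: "ev n \<iota> x ((c,e)#p) = \<iota> c * Lm n x e + ev n \<iota> x p" by (simp add: ev_def)
lemma coef_Nil[simp]: "coef [] e = 0" by (simp add: coef_def)
lemma coef_Cons[simp]: "coef ((c,e')#p) e = (if e' = e then c else 0) + coef p e" by (simp add: coef_def)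

lemma regroup:
  assumes rh: "ring_hom_fun \<iota>" and "finite E" and "snd ` set p \<subseteq> E"
  shows "ev n \<iota> x p = (\<Sum>e\<in>E. \<iota> (coef p e) * Lm n x e)"
  using assms(3)
proof (induction p)
  case Nil then show ?case by (simp add: hom_0[OF rh])
next
  case (Cons a p)
  obtain c e0 where a: "a = (c,e0)" by fastforce
  have e0: "e0 \<in> E" using Cons.prems a by auto
  have "ev n \<iota> x (a#p) = \<iota> c * Lm n x e0 + (\<Sum>e\<in>E. \<iota> (coef p e) * Lm n x e)"
    using Cons a by auto
  also have "\<iota> c * Lm n x e0 = (\<Sum>e\<in>E. (if e0 = e then \<iota> c * Lm n x e else 0))"
    using e0 assms(2) by (simp add: sum.delta)
  also have "\<dots> + (\<Sum>e\<in>E. \<iota> (coef p e) * Lm n x e) = (\<Sum>e\<in>E. \<iota> (coef (a#p) e) * Lm n x e)"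
    by (simp add: a sum.distrib[symmetric] hom_add[OF rh] hom_0[OF rh] distrib_right)
       (intro sum.cong refl, simp add: hom_0[OF rh])
  finally show ?case .
qed

lemma rf_hom: "is_rat_fun_field n \<iota> x \<Longrightarrow> ring_hom_fun \<iota>"
  unfolding is_rat_fun_field_def by blast

lemma rf_indep: assumes "is_rat_fun_field n \<iota> x" "finite M" "M \<subseteq> {m. \<forall>i\<ge>n. m i = 0}"
   "(\<Sum>m\<in>M. \<iota> (c m) * (\<Prod>i<n. x i ^ m i)) = 0" shows "\<forall>m\<in>M. c m = 0"
  using assms unfolding is_rat_fun_field_def by blast

lemma rf_gen: assumes "is_rat_fun_field n \<iota> x" "subfield_set S" "range \<iota> \<subseteq> S" "x ` {..<n} \<subseteq> S"
  shows "S = UNIV"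
  using assms unfolding is_rat_fun_field_def by blast

lemma rf_nz: assumes rf: "is_rat_fun_field n \<iota> x" and i: "i < n" shows "x i \<noteq> 0"
proof
  assume x0: "x i = 0"
  let ?d = "\<lambda>j::nat. if j = i then 1 else (0::nat)"
  have "(\<Prod>j<n. x j ^ ?d j) = (\<Prod>j<n. if j = i then x j else 1)"
    by (intro prod.cong) auto
  also have "\<dots> = x i" using i by (simp add: prod.delta)
  finally have "(\<Sum>m\<in>{?d}. \<iota> ((\<lambda>_. 1) m) * (\<Prod>j<n. x j ^ m j)) = 0" using x0 by simp
  then have "\<forall>m\<in>{?d}. (\<lambda>_. (1::'a)) m = 0"
    by (intro rf_indep[OF rf]) (use i in auto)
  then show False by simp
qed

lemma Lm_add: assumes "\<forall>p<n. x p \<noteq> 0" shows "Lm n x (\<lambda>p. e p + f p) = Lm n x e * Lm n x f"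
  unfolding Lm_def by (simp add: power_int_add assms prod.distrib[symmetric])

lemma laurent_indep:
  assumes rf: "is_rat_fun_field n \<iota> x" and fin: "finite E" and sE: "\<forall>e\<in>E. supp n e"
    and s0: "(\<Sum>e\<in>E. \<iota> (c e) * Lm n x e) = 0"
  shows "\<forall>e\<in>E. c e = 0"
proof -
  have nz: "\<forall>p<n. x p \<noteq> 0" using rf_nz[OF rf] by blast
  define N where "N = (\<Sum>e\<in>E. \<Sum>p<n. \<bar>e p\<bar>)"
  have bnd: "\<bar>e p\<bar> \<le> N" if "e \<in> E" "p < n" for e p
  proof -
    have "\<bar>e p\<bar> \<le> (\<Sum>p<n. \<bar>e p\<bar>)" using that by (intro member_le_sum) auto
    also have "\<dots> \<le> N" unfolding N_def using that fin by (intro member_le_sum) auto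
    finally show ?thesis .
  qed
  define h where "h e = (\<lambda>p. if p < n then nat (e p + N) else 0)" for e :: "nat \<Rightarrow> int"
  have inj: "inj_on h E"
  proof
    fix e e' assume ee: "e \<in> E" "e' \<in> E" "h e = h e'"
    show "e = e'"
    proof
      fix p show "e p = e' p"
      proof (cases "p < n")
        case True
        then have "nat (e p + N) = nat (e' p + N)" using fun_cong[OF ee(3), of p] by (simp add: h_def)
        moreover have "e p + N \<ge> 0" "e' p + N \<ge> 0" using bnd[OF ee(1) True] bnd[OF ee(2) True] by auto
        ultimately show ?thesis by simp
      next
        case False then show ?thesis using sE ee(1,2) unfolding supp_def by (metis not_less)
      qed
    qed
  qed
  define W where "W = Lm n x (\<lambda>_. N)"
  have key: "Lm n x e * W = (\<Prod>i<n. x i ^ h e i)" if "e \<in> E" for e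
  proof -
    have "Lm n x e * W = Lm n x (\<lambda>p. e p + N)" unfolding W_def by (simp add: Lm_add nz)
    also have "\<dots> = (\<Prod>i<n. x i ^ h e i)" unfolding Lm_def
    proof (intro prod.cong refl)
      fix i assume "i \<in> {..<n}"
      then have "e i + N = int (h e i)" using bnd[OF that, of i] by (auto simp: h_def)
      then show "x i powi (e i + N) = x i ^ h e i" by simp
    qed
    finally show ?thesis .
  qed
  have "0 = (\<Sum>e\<in>E. \<iota> (c e) * Lm n x e) * W" using s0 by simp
  also have "\<dots> = (\<Sum>e\<in>E. \<iota> (c (inv_into E h (h e))) * (\<Prod>i<n. x i ^ h e i))"
    unfolding sum_distrib_right by (intro sum.cong refl) (simp add: inv_into_f_f[OF inj] key mult.assoc)
  also have "\<dots> = (\<Sum>m\<in>h ` E. \<iota> (c (inv_into E h m)) * (\<Prod>i<n. x i ^ m i))"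
    by (rule sum.reindex[OF inj, symmetric, unfolded comp_def])
  finally have "\<forall>m\<in>h ` E. c (inv_into E h m) = 0"
    by (intro rf_indep[OF rf]) (auto simp: fin h_def)
  then show ?thesis by (simp add: inv_into_f_f[OF inj])
qed



definition pmul :: "('k::field \<times> (nat \<Rightarrow> int)) list \<Rightarrow> ('k \<times> (nat \<Rightarrow> int)) list \<Rightarrow> ('k \<times> (nat \<Rightarrow> int)) list" where
  "pmul p q = concat (map (\<lambda>(c,e). map (\<lambda>(d,f). (c*d, \<lambda>i. e i + f i)) q) p)"
definition pneg :: "('k::field \<times> (nat \<Rightarrow> int)) list \<Rightarrow> ('k \<times> (nat \<Rightarrow> int)) list" where
  "pneg p = map (\<lambda>(c,e). (-c, e)) p"
definition tr :: "((nat \<Rightarrow> int) \<Rightarrow> (nat \<Rightarrow> int)) \<Rightarrow> ('k::field \<times> (nat \<Rightarrow> int)) list \<Rightarrow> ('k \<times> (nat \<Rightarrow> int)) list" where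
  "tr T p = map (\<lambda>(c,e). (c, T e)) p"
definition suppL :: "nat \<Rightarrow> ('k::field \<times> (nat \<Rightarrow> int)) list \<Rightarrow> bool" where
  "suppL n p \<longleftrightarrow> (\<forall>ce\<in>set p. supp n (snd ce))"

lemma ev_append: "ev n \<iota> x (p @ q) = ev n \<iota> x p + ev n \<iota> x q"
  by (simp add: ev_def)
lemma ev_pneg: "ring_hom_fun \<iota> \<Longrightarrow> ev n \<iota> x (pneg p) = - ev n \<iota> x p"
  by (induction p) (auto simp: pneg_def hom_neg)
lemma ev_pmul1: assumes "ring_hom_fun \<iota>" "\<forall>p<n. x p \<noteq> 0"
  shows "ev n \<iota> x (map (\<lambda>(d,f). (c*d, \<lambda>i. e i + f i)) q) = \<iota> c * Lm n x e * ev n \<iota> x q"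
  by (induction q) (auto simp: Lm_add[OF assms(2)] hom_mult[OF assms(1)] distrib_left mult_ac)
lemma ev_pmul: assumes "ring_hom_fun \<iota>" "\<forall>p<n. x p \<noteq> 0"
  shows "ev n \<iota> x (pmul p q) = ev n \<iota> x p * ev n \<iota> x q"
  by (induction p) (auto simp: pmul_def ev_append ev_pmul1[OF assms] distrib_right)

lemma tr_append: "tr T (p @ q) = tr T p @ tr T q" by (simp add: tr_def)
lemma tr_pneg: "tr T (pneg p) = pneg (tr T p)" by (induction p) (auto simp: tr_def pneg_def)
lemma tr_pmul: assumes "\<And>e f. T (\<lambda>i. e i + f i) = (\<lambda>i. T e i + T f i)"
  shows "tr T (pmul p q) = pmul (tr T p) (tr T q)"
  by (induction p) (auto simp: tr_def pmul_def assms)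

lemma suppL_append: "suppL n (p @ q) = (suppL n p \<and> suppL n q)" by (auto simp: suppL_def)
lemma suppL_pneg: "suppL n (pneg p) = suppL n p" by (auto simp: suppL_def pneg_def)
lemma suppL_pmul: "suppL n p \<Longrightarrow> suppL n q \<Longrightarrow> suppL n (pmul p q)"
  unfolding suppL_def pmul_def supp_def by fastforce
lemma suppL_tr: "(\<And>e. supp n (T e)) \<Longrightarrow> suppL n (tr T p)"
  by (auto simp: suppL_def tr_def)

lemma coef_tr:
  assumes Tinj: "\<And>e e'. supp n e \<Longrightarrow> supp n e' \<Longrightarrow> T e = T e' \<Longrightarrow> e = e'"
    and "suppL n p" "supp n e"
  shows "coef (tr T p) (T e) = coef p e"
  using assms(2)
proof (induction p)
  case Nil then show ?case by (simp add: tr_def)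
next
  case (Cons a p)
  obtain c e0 where a: "a = (c,e0)" by fastforce
  have "supp n e0" "suppL n p" using Cons.prems a by (auto simp: suppL_def)
  then show ?case using Cons.IH a Tinj[OF \<open>supp n e0\<close> assms(3)] by (auto simp: tr_def)
qed

lemma transfer:
  assumes rf1: "is_rat_fun_field n \<iota> x" and rf2: "is_rat_fun_field n \<iota>' y"
    and Tsupp: "\<And>e. supp n (T e)"
    and Tinj: "\<And>e e'. supp n e \<Longrightarrow> supp n e' \<Longrightarrow> T e = T e' \<Longrightarrow> e = e'"
    and sp: "suppL n p"
  shows "(ev n \<iota> x p = 0) = (ev n \<iota>' y (tr T p) = 0)"
proof -
  have rh1: "ring_hom_fun \<iota>" and rh2: "ring_hom_fun \<iota>'" using rf1 rf2 by (auto simp: rf_hom)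
  define E where "E = snd ` set p"
  have fin: "finite E" and sE: "\<forall>e\<in>E. supp n e" using sp by (auto simp: E_def suppL_def)
  have inj: "inj_on T E" using Tinj sE by (meson inj_onI)
  have ex: "ev n \<iota> x p = (\<Sum>e\<in>E. \<iota> (coef p e) * Lm n x e)"
    by (rule regroup[OF rh1 fin]) (simp add: E_def)
  have ey: "ev n \<iota>' y (tr T p) = (\<Sum>e'\<in>T ` E. \<iota>' (coef (tr T p) e') * Lm n y e')"
    by (rule regroup[OF rh2]) (force simp: E_def tr_def fin)+
  also have "\<dots> = (\<Sum>e\<in>E. \<iota>' (coef (tr T p) (T e)) * Lm n y (T e))"
    by (rule sum.reindex[OF inj, unfolded comp_def])
  also have "\<dots> = (\<Sum>e\<in>E. \<iota>' (coef p e) * Lm n y (T e))"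
    by (intro sum.cong refl) (simp add: coef_tr[OF Tinj sp] sE)
  finally have ey2: "ev n \<iota>' y (tr T p) = (\<Sum>e\<in>E. \<iota>' (coef p e) * Lm n y (T e))" .
  show ?thesis
  proof
    assume "ev n \<iota> x p = 0"
    then have "\<forall>e\<in>E. coef p e = 0" using laurent_indep[OF rf1 fin sE] ex by simp
    then show "ev n \<iota>' y (tr T p) = 0" using ey2 by (simp add: hom_0[OF rh2])
  next
    assume "ev n \<iota>' y (tr T p) = 0"
    then have "\<forall>e'\<in>T ` E. coef (tr T p) e' = 0"
      using laurent_indep[OF rf2 finite_imageI[OF fin], where c="coef (tr T p)"] ey Tsupp by auto
    then have "\<forall>e\<in>E. coef p e = 0" using coef_tr[OF Tinj sp] sE by auto
    then show "ev n \<iota> x p = 0" using ex by (simp add: hom_0[OF rh1])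
  qed
qed



definition one_e :: "('k::field \<times> (nat \<Rightarrow> int)) list" where "one_e = [(1, \<lambda>_. 0)]"
definition dl :: "nat \<Rightarrow> nat \<Rightarrow> int" where "dl i = (\<lambda>j. if j = i then 1 else 0)"

lemma Lm_zero[simp]: "Lm n x (\<lambda>_. 0) = 1" by (simp add: Lm_def)
lemma Lm_dl: "i < n \<Longrightarrow> Lm n x (dl i) = x i"
proof -
  assume i: "i < n"
  have "Lm n x (dl i) = (\<Prod>j<n. if j = i then x j else 1)"
    unfolding Lm_def dl_def by (intro prod.cong) auto
  then show ?thesis using i by simp
qed

lemma supp_dl: "i < n \<Longrightarrow> supp n (dl i)" by (simp add: supp_def dl_def)

lemma subfieldI:
  assumes "0 \<in> S" "1 \<in> S" "\<And>a b. a \<in> S \<Longrightarrow> b \<in> S \<Longrightarrow> a + b \<in> S"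
    "\<And>a b. a \<in> S \<Longrightarrow> b \<in> S \<Longrightarrow> a * b \<in> S" "\<And>a. a \<in> S \<Longrightarrow> - a \<in> S"
    "\<And>a. a \<in> S \<Longrightarrow> inverse a \<in> S"
  shows "subfield_set S"
  unfolding subfield_set_def using assms by simp

locale hsetup =
  fixes n :: nat and \<iota> :: "'k::field \<Rightarrow> 'a::field" and x :: "nat \<Rightarrow> 'a"
    and \<iota>' :: "'k \<Rightarrow> 'b::field" and y :: "nat \<Rightarrow> 'b" and T :: "(nat \<Rightarrow> int) \<Rightarrow> (nat \<Rightarrow> int)"
  assumes rf1: "is_rat_fun_field n \<iota> x" and rf2: "is_rat_fun_field n \<iota>' y"
    and Tsupp: "\<And>e. supp n (T e)"
    and Tinj: "\<And>e e'. supp n e \<Longrightarrow> supp n e' \<Longrightarrow> T e = T e' \<Longrightarrow> e = e'"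
    and Tadd: "\<And>e f. T (\<lambda>i. e i + f i) = (\<lambda>i. T e i + T f i)"
    and Tsurj: "\<And>j. j < n \<Longrightarrow> \<exists>e. supp n e \<and> T e = dl j"
begin

lemma rh1: "ring_hom_fun \<iota>" and rh2: "ring_hom_fun \<iota>'" using rf1 rf2 by (auto simp: rf_hom)
lemma nz1: "\<forall>p<n. x p \<noteq> 0" and nz2: "\<forall>p<n. y p \<noteq> 0" using rf_nz[OF rf1] rf_nz[OF rf2] by auto

abbreviation "X \<equiv> ev n \<iota> x"
abbreviation "Y \<equiv> \<lambda>p. ev n \<iota>' y (tr T p)"

lemma T0: "T (\<lambda>_. 0) = (\<lambda>_. 0)"
proof -
  have "T (\<lambda>i. (\<lambda>_. 0) i + (\<lambda>_. 0) i) = (\<lambda>i. T (\<lambda>_. 0) i + T (\<lambda>_. 0) i)" by (rule Tadd)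
  then have "\<And>i. T (\<lambda>_. 0) i = T (\<lambda>_. 0) i + T (\<lambda>_. 0) i" by (metis add_0)
  then show ?thesis by auto
qed

lemma Yappend: "Y (p @ q) = Y p + Y q" by (simp add: tr_append ev_append)
lemma Ypmul: "Y (pmul p q) = Y p * Y q" by (simp add: tr_pmul[of T, OF Tadd] ev_pmul[OF rh2 nz2])
lemma Ypneg: "Y (pneg p) = - Y p" by (simp add: tr_pneg ev_pneg[OF rh2])
lemma Xpmul: "X (pmul p q) = X p * X q" by (simp add: ev_pmul[OF rh1 nz1])
lemma Xpneg: "X (pneg p) = - X p" by (simp add: ev_pneg[OF rh1])
lemma Xone: "X one_e = 1" by (simp add: one_e_def hom_1[OF rh1])
lemma Yone: "Y one_e = 1" by (simp add: one_e_def tr_def T0 hom_1[OF rh2])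
lemma one_supp: "suppL n one_e" by (simp add: one_e_def suppL_def supp_def)

lemma XY0: "suppL n p \<Longrightarrow> (X p = 0) = (Y p = 0)"
  by (rule transfer[OF rf1 rf2 Tsupp Tinj])

definition R :: "'a \<Rightarrow> ('k \<times> (nat \<Rightarrow> int)) list \<Rightarrow> ('k \<times> (nat \<Rightarrow> int)) list \<Rightarrow> bool" where
  "R a p q \<longleftrightarrow> suppL n p \<and> suppL n q \<and> X q \<noteq> 0 \<and> a = X p / X q"

definition F where "F p q = Y p / Y q"

lemma R_nz: "R a p q \<Longrightarrow> Y q \<noteq> 0" unfolding R_def using XY0[of q] by blast

lemma R_add: "R a p1 q1 \<Longrightarrow> R b p2 q2 \<Longrightarrow> R (a+b) (pmul p1 q2 @ pmul p2 q1) (pmul q1 q2)"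
  by (auto simp: R_def suppL_append suppL_pmul ev_append Xpmul field_simps)
lemma R_mult: "R a p1 q1 \<Longrightarrow> R b p2 q2 \<Longrightarrow> R (a*b) (pmul p1 p2) (pmul q1 q2)"
  by (auto simp: R_def suppL_pmul Xpmul)
lemma R_neg: "R a p1 q1 \<Longrightarrow> R (-a) (pneg p1) q1"
  by (auto simp: R_def suppL_pneg Xpneg)

lemma R0: "R 0 [] one_e" using Xone one_supp by (simp add: R_def suppL_def)

lemma rep: "\<exists>p q. R a p q"
proof -
  let ?S = "{a. \<exists>p q. R a p q}"
  have "subfield_set ?S"
  proof (rule subfieldI)
    show "0 \<in> ?S" using R0 by blast
    show "1 \<in> ?S" using R_def Xone one_supp by (auto intro!: exI[of _ one_e])
    show "a + b \<in> ?S" if "a \<in> ?S" "b \<in> ?S" for a b using that R_add by blast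
    show "a * b \<in> ?S" if "a \<in> ?S" "b \<in> ?S" for a b using that R_mult by blast
    show "- a \<in> ?S" if "a \<in> ?S" for a using that R_neg by blast
    show "inverse a \<in> ?S" if aS: "a \<in> ?S" for a
    proof (cases "a = 0")
      case True
      then show ?thesis using R0 by auto
    next
      case False
      obtain p q where "R a p q" using aS by blast
      then have "R (inverse a) q p" using False by (auto simp: R_def)
      then show ?thesis by blast
    qed
  qed
  moreover have "range \<iota> \<subseteq> ?S"
  proof
    fix b assume "b \<in> range \<iota>"
    then obtain r where "b = \<iota> r" by blast
    then have "R b [(r, \<lambda>_. 0)] one_e" using Xone one_supp by (simp add: R_def suppL_def supp_def hom_0 rh1)
    then show "b \<in> ?S" by blast
  qed
  moreover have "x ` {..<n} \<subseteq> ?S"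
  proof
    fix b assume "b \<in> x ` {..<n}"
    then obtain i where i: "i < n" "b = x i" by blast
    then have "R b [(1, dl i)] one_e" using Xone one_supp
      by (simp add: R_def suppL_def supp_dl hom_1[OF rh1] Lm_dl)
    then show "b \<in> ?S" by blast
  qed
  ultimately have "?S = UNIV" by (rule rf_gen[OF rf1])
  then show ?thesis by blast
qed

lemma wd: assumes "R a p1 q1" "R a p2 q2" shows "F p1 q1 = F p2 q2"
proof -
  let ?r = "pmul p1 q2 @ pneg (pmul p2 q1)"
  have s: "suppL n ?r" using assms by (auto simp: R_def suppL_append suppL_pneg suppL_pmul)
  have "X p1 / X q1 = X p2 / X q2" using assms by (auto simp: R_def)
  then have "X ?r = 0" using assms by (auto simp: R_def ev_append Xpmul Xpneg field_simps)
  then have "Y ?r = 0" using XY0[OF s] by simp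
  then have "Y p1 * Y q2 = Y p2 * Y q1" by (simp add: Yappend Ypmul Ypneg)
  then show ?thesis using R_nz[OF assms(1)] R_nz[OF assms(2)] by (simp add: F_def field_simps)
qed

definition f :: "'a \<Rightarrow> 'b" where "f a = (SOME w. \<exists>p q. R a p q \<and> w = F p q)"

lemma f_eq: assumes "R a p q" shows "f a = F p q"
proof -
  have "\<exists>w. \<exists>p q. R a p q \<and> w = F p q" using assms by blast
  then have "\<exists>p' q'. R a p' q' \<and> f a = F p' q'" unfolding f_def by (rule someI_ex)
  then obtain p' q' where "R a p' q'" "f a = F p' q'" by blast
  then show ?thesis using wd[OF _ assms] by metis
qed

end



context hsetup begin

lemma f_add: "f (a + b) = f a + f b"
proof -
  obtain p1 q1 p2 q2 where r: "R a p1 q1" "R b p2 q2" using rep by blast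
  have "f (a+b) = F (pmul p1 q2 @ pmul p2 q1) (pmul q1 q2)" by (rule f_eq[OF R_add[OF r]])
  also have "\<dots> = F p1 q1 + F p2 q2" using R_nz[OF r(1)] R_nz[OF r(2)]
    by (simp add: F_def Yappend Ypmul field_simps)
  finally show ?thesis using f_eq[OF r(1)] f_eq[OF r(2)] by simp
qed

lemma f_mult: "f (a * b) = f a * f b"
proof -
  obtain p1 q1 p2 q2 where r: "R a p1 q1" "R b p2 q2" using rep by blast
  have "f (a*b) = F (pmul p1 p2) (pmul q1 q2)" by (rule f_eq[OF R_mult[OF r]])
  also have "\<dots> = F p1 q1 * F p2 q2" using R_nz[OF r(1)] R_nz[OF r(2)]
    by (simp add: F_def Ypmul)
  finally show ?thesis using f_eq[OF r(1)] f_eq[OF r(2)] by simp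
qed

lemma f_1: "f 1 = 1"
proof -
  have "R 1 one_e one_e" using Xone one_supp by (simp add: R_def)
  then show ?thesis using f_eq Yone by (simp add: F_def)
qed

lemma f_0: "f 0 = 0"
proof -
  have "f 0 = f 0 + f 0" using f_add[of 0 0] by simp
  then show ?thesis by (metis add_cancel_right_right)
qed
lemma f_neg: "f (- a) = - f a" using f_add[of a "-a"] f_0 by (simp add: eq_neg_iff_add_eq_0 add.commute)

lemma f_iota: "f (\<iota> r) = \<iota>' r"
proof -
  have "R (\<iota> r) [(r, \<lambda>_. 0)] one_e" using Xone one_supp by (simp add: R_def suppL_def supp_def)
  then show ?thesis using f_eq Yone by (simp add: F_def tr_def T0)
qed

lemma f_x: "i < n \<Longrightarrow> f (x i) = Lm n y (T (dl i))"
proof -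
  assume i: "i < n"
  then have "R (x i) [(1, dl i)] one_e" using Xone one_supp
    by (simp add: R_def suppL_def supp_dl hom_1[OF rh1] Lm_dl)
  then show ?thesis using f_eq Yone by (simp add: F_def tr_def hom_1[OF rh2])
qed

lemma f_nz: "a \<noteq> 0 \<Longrightarrow> f a \<noteq> 0"
  using f_mult[of a "inverse a"] f_1 by auto

lemma f_inj: "inj f"
proof
  fix a b assume "f a = f b"
  then have "f (a - b) = 0" using f_add[of a "-b"] f_neg[of b] by simp
  then have "a - b = 0" using f_nz by blast
  then show "a = b" by simp
qed

lemma f_inv: "f (inverse a) = inverse (f a)"
proof (cases "a = 0")
  case True then show ?thesis by (simp add: f_0)
next
  case False
  then have "f a * f (inverse a) = 1" using f_mult[of a "inverse a"] f_1 by simp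
  then show ?thesis by (metis inverse_unique)
qed

lemma f_surj: "surj f"
proof -
  let ?S = "range f"
  have "subfield_set ?S"
  proof (rule subfieldI)
    show "0 \<in> ?S" using f_0 by (metis rangeI)
    show "1 \<in> ?S" using f_1 by (metis rangeI)
    show "a + b \<in> ?S" if ab: "a \<in> ?S" "b \<in> ?S" for a b
    proof -
      obtain u v where "a = f u" "b = f v" using ab by blast
      then have "a + b = f (u + v)" by (simp add: f_add)
      then show ?thesis by blast
    qed
    show "a * b \<in> ?S" if ab: "a \<in> ?S" "b \<in> ?S" for a b
    proof -
      obtain u v where "a = f u" "b = f v" using ab by blast
      then have "a * b = f (u * v)" by (simp add: f_mult)
      then show ?thesis by blast
    qed
    show "- a \<in> ?S" if ab: "a \<in> ?S" for a
    proof -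
      obtain u where "a = f u" using ab by blast
      then have "- a = f (- u)" by (simp add: f_neg)
      then show ?thesis by blast
    qed
    show "inverse a \<in> ?S" if ab: "a \<in> ?S" for a
    proof -
      obtain u where "a = f u" using ab by blast
      then have "inverse a = f (inverse u)" by (simp add: f_inv)
      then show ?thesis by blast
    qed
  qed
  moreover have "range \<iota>' \<subseteq> ?S"
  proof
    fix b assume "b \<in> range \<iota>'"
    then obtain r where "b = \<iota>' r" by blast
    then have "b = f (\<iota> r)" by (simp add: f_iota)
    then show "b \<in> ?S" by blast
  qed
  moreover have "y ` {..<n} \<subseteq> ?S"
  proof
    fix b assume "b \<in> y ` {..<n}"
    then obtain j where j: "j < n" "b = y j" by blast
    obtain e where e: "supp n e" "T e = dl j" using Tsurj[OF j(1)] by blast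
    have "R (X [(1,e)]) [(1,e)] one_e" using Xone one_supp e by (simp add: R_def suppL_def)
    then have "f (X [(1,e)]) = y j" using f_eq Yone e j by (simp add: F_def tr_def hom_1[OF rh2] Lm_dl)
    then show "b \<in> ?S" using j by (metis rangeI)
  qed
  ultimately show ?thesis using rf_gen[OF rf2] by blast
qed

end



lemma delta_sum: fixes g :: "nat \<Rightarrow> 'k::field"
  assumes "\<forall>i<n. \<forall>j<n. (\<Sum>l<n. B i l * A l j) = (if i = j then 1 else (0::int))" "j < n"
  shows "(\<Sum>r<n. (\<Sum>q<n. of_int (B j q) * of_int (A q r)) * g r) = g j"
proof -
  have "(\<Sum>r<n. (\<Sum>q<n. of_int (B j q) * of_int (A q r)) * g r) = (\<Sum>r<n. (if j = r then g r else 0))"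
  proof (intro sum.cong refl)
    fix r assume r: "r \<in> {..<n}"
    have "(\<Sum>q<n. of_int (B j q) * of_int (A q r) :: 'k) = of_int (\<Sum>q<n. B j q * A q r)" by simp
    also have "\<dots> = (if j = r then 1 else 0)" using assms r by simp
    finally show "(\<Sum>q<n. of_int (B j q) * of_int (A q r)) * g r = (if j = r then g r else 0)" by simp
  qed
  also have "\<dots> = g j" using assms(2) by (simp add: sum.delta)
  finally show ?thesis .
qed

lemma congr_inv: fixes L :: "nat \<Rightarrow> nat \<Rightarrow> 'k::field"
  assumes BA: "\<forall>i<n. \<forall>j<n. (\<Sum>l<n. B i l * A l j) = (if i = j then 1 else (0::int))"
    and i: "i < n" and j: "j < n"
  shows "(\<Sum>p<n. \<Sum>q<n. of_int (B i p) * (\<Sum>r<n. \<Sum>s<n. of_int (A p r) * L r s * of_int (A q s)) * of_int (B j q)) = L i j"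
proof -
  have inner: "(\<Sum>q<n. (\<Sum>r<n. \<Sum>s<n. of_int (A p r) * L r s * of_int (A q s)) * of_int (B j q)) = (\<Sum>r<n. of_int (A p r) * L r j)" for p
  proof -
    have "(\<Sum>q<n. (\<Sum>r<n. \<Sum>s<n. of_int (A p r) * L r s * of_int (A q s)) * of_int (B j q))
       = (\<Sum>q<n. \<Sum>r<n. \<Sum>s<n. of_int (A p r) * L r s * (of_int (B j q) * of_int (A q s)))"
      by (simp add: sum_distrib_right sum_distrib_left mult_ac)
    also have "\<dots> = (\<Sum>r<n. \<Sum>q<n. \<Sum>s<n. of_int (A p r) * L r s * (of_int (B j q) * of_int (A q s)))"
      by (rule sum.swap)
    also have "\<dots> = (\<Sum>r<n. \<Sum>s<n. \<Sum>q<n. of_int (A p r) * L r s * (of_int (B j q) * of_int (A q s)))"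
      by (intro sum.cong refl sum.swap)
    also have "\<dots> = (\<Sum>r<n. of_int (A p r) * (\<Sum>s<n. (\<Sum>q<n. of_int (B j q) * of_int (A q s)) * L r s))"
      by (simp add: sum_distrib_left sum_distrib_right mult_ac)
    also have "\<dots> = (\<Sum>r<n. of_int (A p r) * L r j)"
      by (simp add: delta_sum[OF BA j])
    finally show ?thesis .
  qed
  have "(\<Sum>p<n. \<Sum>q<n. of_int (B i p) * (\<Sum>r<n. \<Sum>s<n. of_int (A p r) * L r s * of_int (A q s)) * of_int (B j q))
      = (\<Sum>p<n. of_int (B i p) * (\<Sum>q<n. (\<Sum>r<n. \<Sum>s<n. of_int (A p r) * L r s * of_int (A q s)) * of_int (B j q)))"
    by (simp only: mult.assoc sum_distrib_left[symmetric])
  also have "\<dots> = (\<Sum>p<n. \<Sum>r<n. of_int (B i p) * of_int (A p r) * L r j)"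
    unfolding inner by (simp add: sum_distrib_left mult.assoc)
  also have "\<dots> = (\<Sum>r<n. \<Sum>p<n. of_int (B i p) * of_int (A p r) * L r j)" by (rule sum.swap)
  also have "\<dots> = (\<Sum>r<n. (\<Sum>p<n. of_int (B i p) * of_int (A p r)) * L r j)"
    by (simp add: sum_distrib_right)
  also have "\<dots> = L i j" by (rule delta_sum[OF BA i])
  finally show ?thesis .
qed



lemma der_facts:
  fixes f D :: "'a::field \<Rightarrow> 'b::field"
  assumes fmul: "\<And>a b. f (a*b) = f a * f b" and f1: "f 1 = 1"
   and da: "\<And>a b. D (a+b) = D a + D b" and dm: "\<And>a b. D (a*b) = D a * f b + f a * D b"
   and d1: "D 1 = 0"
  shows "D 0 = 0" "D (-a) = - D a" "a \<noteq> 0 \<Longrightarrow> D (inverse a) = - D a * f (inverse a) / f a"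
proof -
  have "D 0 = D 0 + D 0" using da[of 0 0] by simp
  then show z: "D 0 = 0" by (metis add_cancel_right_right)
  show "D (-a) = - D a" using da[of a "-a"] z by (simp add: eq_neg_iff_add_eq_0 add.commute)
  assume a: "a \<noteq> 0"
  have fa: "f a * f (inverse a) = 1" using fmul[of a "inverse a"] f1 a by simp
  then have fa0: "f a \<noteq> 0" by auto
  have "0 = D a * f (inverse a) + f a * D (inverse a)" using dm[of a "inverse a"] a d1 by simp
  then have "f a * D (inverse a) = - D a * f (inverse a)" by (simp add: eq_neg_iff_add_eq_0 add.commute)
  then show "D (inverse a) = - D a * f (inverse a) / f a" using fa0 by (simp add: field_simps)
qed

lemma deriv_unique:
  fixes f Da Db :: "'a::field \<Rightarrow> 'b::field"
  assumes rf: "is_rat_fun_field n \<iota> x"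
   and fmul: "\<And>a b. f (a*b) = f a * f b" and f1: "f 1 = 1"
   and daa: "\<And>a b. Da (a+b) = Da a + Da b" and d1m: "\<And>a b. Da (a*b) = Da a * f b + f a * Da b"
   and d1c: "\<And>r. Da (\<iota> r) = 0"
   and d2a: "\<And>a b. Db (a+b) = Db a + Db b" and d2m: "\<And>a b. Db (a*b) = Db a * f b + f a * Db b"
   and d2c: "\<And>r. Db (\<iota> r) = 0"
   and gen: "\<And>i. i < n \<Longrightarrow> Da (x i) = Db (x i)"
  shows "Da a = Db a"
proof -
  have rh: "ring_hom_fun \<iota>" by (rule rf_hom[OF rf])
  have one1: "Da 1 = 0" using d1c[of 1] hom_1[OF rh] by simp
  have one2: "Db 1 = 0" using d2c[of 1] hom_1[OF rh] by simp
  note F1 = der_facts[OF fmul f1 daa d1m one1]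
  note F2 = der_facts[OF fmul f1 d2a d2m one2]
  let ?S = "{a. Da a = Db a}"
  have "subfield_set ?S"
  proof (rule subfieldI)
    show "0 \<in> ?S" using F1(1) F2(1) by simp
    show "1 \<in> ?S" using one1 one2 by simp
    show "a + b \<in> ?S" if "a \<in> ?S" "b \<in> ?S" for a b using that daa d2a by simp
    show "a * b \<in> ?S" if "a \<in> ?S" "b \<in> ?S" for a b using that d1m d2m by simp
    show "- a \<in> ?S" if "a \<in> ?S" for a using that F1(2) F2(2) by simp
    show "inverse a \<in> ?S" if "a \<in> ?S" for a
      using that F1(1) F2(1) F1(3)[of a] F2(3)[of a] by (cases "a = 0") simp_all
  qed
  moreover have "range \<iota> \<subseteq> ?S" using d1c d2c by auto
  moreover have "x ` {..<n} \<subseteq> ?S" using gen by auto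
  ultimately have "?S = UNIV" by (rule rf_gen[OF rf])
  then show ?thesis by blast
qed



theorem lemma5p1:
  fixes n :: nat
    and L M :: "nat \<Rightarrow> nat \<Rightarrow> 'k::field_char_0"
    and A :: "nat \<Rightarrow> nat \<Rightarrow> int"
    and \<iota> :: "'k \<Rightarrow> 'a::field" and x :: "nat \<Rightarrow> 'a" and br :: "'a \<Rightarrow> 'a \<Rightarrow> 'a"
    and \<iota>' :: "'k \<Rightarrow> 'b::field" and y :: "nat \<Rightarrow> 'b" and br' :: "'b \<Rightarrow> 'b \<Rightarrow> 'b"
  assumes "antisym_mat n L" and "antisym_mat n M"
    and "GL_int n A"
    and "\<forall>i<n. \<forall>j<n. M i j = congr_mat n A L i j"
    and "is_k_lambda n L \<iota> x br"
    and "is_k_lambda n M \<iota>' y br'"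
  shows "\<exists>f. poisson_iso \<iota> br \<iota>' br' f"
proof -
  obtain B where AB: "\<forall>i<n. \<forall>j<n. (\<Sum>l<n. A i l * B l j) = (if i = j then 1 else 0)"
    and BA: "\<forall>i<n. \<forall>j<n. (\<Sum>l<n. B i l * A l j) = (if i = j then 1 else 0)"
    using assms(3) unfolding GL_int_def by blast
  have rf1: "is_rat_fun_field n \<iota> x" and pb1: "poisson_bracket \<iota> br"
    and brx: "\<forall>i<n. \<forall>j<n. br (x i) (x j) = \<iota> (L i j) * x i * x j"
    using assms(5) unfolding is_k_lambda_def by blast+
  have rf2: "is_rat_fun_field n \<iota>' y" and pb2: "poisson_bracket \<iota>' br'"
    and bry: "\<forall>i<n. \<forall>j<n. br' (y i) (y j) = \<iota>' (M i j) * y i * y j"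
    using assms(6) unfolding is_k_lambda_def by blast+
  have rh1: "ring_hom_fun \<iota>" and rh2: "ring_hom_fun \<iota>'" using rf1 rf2 by (auto simp: rf_hom)
  define T where "T e = (\<lambda>p. if p < n then (\<Sum>j<n. e j * B j p) else 0)" for e :: "nat \<Rightarrow> int"
  have Tsupp: "\<And>e. supp n (T e)" by (simp add: T_def supp_def)
  have Trec: "(\<Sum>p<n. T e p * A p j) = e j" if j: "j < n" for e j
  proof -
    have "(\<Sum>p<n. T e p * A p j) = (\<Sum>p<n. \<Sum>i<n. e i * (B i p * A p j))"
      by (simp add: T_def sum_distrib_right mult.assoc)
    also have "\<dots> = (\<Sum>i<n. \<Sum>p<n. e i * (B i p * A p j))" by (rule sum.swap)
    also have "\<dots> = (\<Sum>i<n. e i * (if i = j then 1 else 0))"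
      by (intro sum.cong refl) (simp add: sum_distrib_left[symmetric] BA j)
    also have "\<dots> = (\<Sum>i<n. if i = j then e i else 0)" by (intro sum.cong) auto
    also have "\<dots> = e j" using j by simp
    finally show ?thesis .
  qed
  have Tinj: "e = e'" if "supp n e" "supp n e'" "T e = T e'" for e e'
  proof
    fix j show "e j = e' j"
    proof (cases "j < n")
      case True then show ?thesis using Trec[OF True, of e] Trec[OF True, of e'] that(3) by simp
    next
      case False then show ?thesis using that(1,2) by (simp add: supp_def)
    qed
  qed
  have Tadd: "\<And>e f. T (\<lambda>i. e i + f i) = (\<lambda>i. T e i + T f i)"
    by (auto simp: T_def distrib_right sum.distrib)
  have Tsurj: "\<exists>e. supp n e \<and> T e = dl j" if j: "j < n" for j
  proof (intro exI conjI)
    show "supp n (\<lambda>p. if p < n then A j p else 0)" by (simp add: supp_def)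
    show "T (\<lambda>p. if p < n then A j p else 0) = dl j"
    proof
      fix p show "T (\<lambda>p. if p < n then A j p else 0) p = dl j p"
      proof (cases "p < n")
        case True
        have "T (\<lambda>p. if p < n then A j p else 0) p = (\<Sum>i<n. A j i * B i p)"
          using True by (simp add: T_def)
        then show ?thesis using AB j True by (auto simp: dl_def)
      next
        case False then show ?thesis using j by (simp add: T_def dl_def)
      qed
    qed
  qed
  interpret hs: hsetup n \<iota> x \<iota>' y T
    using rf1 rf2 Tsupp Tinj Tadd Tsurj by unfold_locales auto
  let ?f = hs.f
  have Tdl: "T (dl i) = (\<lambda>p. if p < n then B i p else 0)" if "i < n" for i
  proof
    fix p
    have "(\<Sum>j<n. dl i j * B j p) = (\<Sum>j<n. if j = i then B j p else 0)"
      by (intro sum.cong) (auto simp: dl_def)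
    then show "T (dl i) p = (if p < n then B i p else 0)" using that by (simp add: T_def)
  qed
  have gen0: "?f (br (x i) (x j)) = br' (?f (x i)) (?f (x j))" if i: "i < n" and j: "j < n" for i j
  proof -
    have "br' (?f (x i)) (?f (x j)) = br' (Lm n y (T (dl i))) (Lm n y (T (dl j)))"
      using i j by (simp add: hs.f_x)
    also have "\<dots> = \<iota>' (\<Sum>p<n. \<Sum>q<n. of_int (T (dl i) p) * M p q * of_int (T (dl j) q)) *
        Lm n y (T (dl i)) * Lm n y (T (dl j))"
      by (rule br_Lm_Lm[OF rh2 pb2 bry hs.nz2])
    also have "(\<Sum>p<n. \<Sum>q<n. of_int (T (dl i) p) * M p q * of_int (T (dl j) q)) =
        (\<Sum>p<n. \<Sum>q<n. of_int (B i p) * (\<Sum>r<n. \<Sum>s<n. of_int (A p r) * L r s * of_int (A q s)) * of_int (B j q))"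
      using assms(4) by (intro sum.cong refl) (simp add: Tdl i j congr_mat_def)
    also have "\<dots> = L i j" by (rule congr_inv[OF BA i j])
    also have "\<iota>' (L i j) * Lm n y (T (dl i)) * Lm n y (T (dl j)) = ?f (br (x i) (x j))"
      using i j brx by (simp add: hs.f_mult hs.f_iota hs.f_x)
    finally show ?thesis by simp
  qed
  have pbE: "\<And>\<iota> br. poisson_bracket \<iota> br \<Longrightarrow> (\<forall>a b c. br a (b + c) = br a b + br a c)"
    unfolding poisson_bracket_def by blast
  have step1: "?f (br (x i) b) = br' (?f (x i)) (?f b)" if i: "i < n" for i b
  proof (rule deriv_unique[OF rf1, where f="?f" and Da="\<lambda>b. ?f (br (x i) b)" and Db="\<lambda>b. br' (?f (x i)) (?f b)"])
    show "\<And>a b. ?f (a*b) = ?f a * ?f b" by (rule hs.f_mult)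
    show "?f 1 = 1" by (rule hs.f_1)
    show "\<And>a b. ?f (br (x i) (a+b)) = ?f (br (x i) a) + ?f (br (x i) b)"
      using pbE[OF pb1] by (simp add: hs.f_add)
    show "\<And>a b. ?f (br (x i) (a*b)) = ?f (br (x i) a) * ?f b + ?f a * ?f (br (x i) b)"
      by (simp add: pb_leib[OF pb1] hs.f_add hs.f_mult)
    show "\<And>r. ?f (br (x i) (\<iota> r)) = 0" by (simp add: pb_const[OF pb1 rh1] hs.f_0)
    show "\<And>a b. br' (?f (x i)) (?f (a+b)) = br' (?f (x i)) (?f a) + br' (?f (x i)) (?f b)"
      using pbE[OF pb2] by (simp add: hs.f_add)
    show "\<And>a b. br' (?f (x i)) (?f (a*b)) = br' (?f (x i)) (?f a) * ?f b + ?f a * br' (?f (x i)) (?f b)"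
      by (simp add: pb_leib[OF pb2] hs.f_mult)
    show "\<And>r. br' (?f (x i)) (?f (\<iota> r)) = 0" by (simp add: pb_const[OF pb2 rh2] hs.f_iota)
    show "\<And>j. j < n \<Longrightarrow> ?f (br (x i) (x j)) = br' (?f (x i)) (?f (x j))" using gen0[OF i] by blast
  qed
  have step2: "?f (br b a) = br' (?f b) (?f a)" for a b
  proof (rule deriv_unique[OF rf1, where f="?f" and Da="\<lambda>a. ?f (br b a)" and Db="\<lambda>a. br' (?f b) (?f a)"])
    show "\<And>a b. ?f (a*b) = ?f a * ?f b" by (rule hs.f_mult)
    show "?f 1 = 1" by (rule hs.f_1)
    show "\<And>a c. ?f (br b (a+c)) = ?f (br b a) + ?f (br b c)"
      using pbE[OF pb1] by (simp add: hs.f_add)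
    show "\<And>a c. ?f (br b (a*c)) = ?f (br b a) * ?f c + ?f a * ?f (br b c)"
      by (simp add: pb_leib[OF pb1] hs.f_add hs.f_mult)
    show "\<And>r. ?f (br b (\<iota> r)) = 0" by (simp add: pb_const[OF pb1 rh1] hs.f_0)
    show "\<And>a c. br' (?f b) (?f (a+c)) = br' (?f b) (?f a) + br' (?f b) (?f c)"
      using pbE[OF pb2] by (simp add: hs.f_add)
    show "\<And>a c. br' (?f b) (?f (a*c)) = br' (?f b) (?f a) * ?f c + ?f a * br' (?f b) (?f c)"
      by (simp add: pb_leib[OF pb2] hs.f_mult)
    show "\<And>r. br' (?f b) (?f (\<iota> r)) = 0" by (simp add: pb_const[OF pb2 rh2] hs.f_iota)
    show "?f (br b (x j)) = br' (?f b) (?f (x j))" if j: "j < n" for j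
    proof -
      have "?f (br b (x j)) = ?f (- br (x j) b)" using pb_anti[OF pb1] by metis
      also have "\<dots> = - br' (?f (x j)) (?f b)" by (simp add: hs.f_neg step1[OF j])
      also have "\<dots> = br' (?f b) (?f (x j))" using pb_anti[OF pb2] by metis
      finally show ?thesis .
    qed
  qed
  have "poisson_iso \<iota> br \<iota>' br' ?f"
    unfolding poisson_iso_def
    using hs.f_inj hs.f_surj hs.f_1 hs.f_add hs.f_mult hs.f_iota step2
    by (simp add: bij_def)
  then show ?thesis by blast
qed


end
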